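(* Let $r\in\{0,1\}$ and let $k,l,a_1,a_2,C_1,C_2,a,b,c,b_1,c_1$ be real constants. Put $\alpha(t)=kt+l$, $X=x\cos\alpha+y\sin\alpha$, $Y=-x\sin\alpha+y\cos\alpha$, $\mathbf e_1=(\cos\alpha,\sin\alpha,0)^t$, $\mathbf e_2=(-\sin\alpha,\cos\alpha,0)^t$, and define functions of $Y$: if $r=0$: $\phi=e^{a_1Y}-ae^{-a_1Y}$, $\psi=e^{a_1Y}+ae^{-a_1Y}$, $\xi=be^{a_1Y}-ce^{-a_1Y}$, $\zeta=be^{a_1Y}+ce^{-a_1Y}$, $\vartheta=b_1e^{a_1Y}-c_1e^{-a_1Y}$; if $r=1$: $\phi=\sin(a_1Y)$, $\psi=\cos(a_1Y)$, $\xi=c\sin(a_1Y+b)$, $\zeta=c\cos(a_1Y+b)$, $\vartheta=c_1\sin(a_1Y+b_1)$. Let $$W_1=a_1\big(\vartheta+a_2Y\phi-X\zeta-a_1a_2X^2\psi\big),\qquad W_2=\xi+2a_1a_2X\phi,$$ and $$\mathbf v=k(-y,x,0)^t+C_1e^{(-1)^r\nu a_1^2t}\big(W_1\mathbf e_1+W_2\mathbf e_2\big),\qquad \mathbf H=C_2e^{(-1)^r\eta a_1^2t}\big(W_1\mathbf e_1+W_2\mathbf e_2\big).$$ Then there exists a smooth function $p$ on $\mathbb R\times\mathbb R^3$ such that $(\mathbf v,\mathbf H,p)$ satisfies the MHD system on $\mathbb R\times\mathbb R^3$.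
   Context: Throughout, $\nu,\eta,\mu_0,\rho$ are positive constants. The MHD system for $\mathbf v=(u,v,w)^t$, $\mathbf H=(H^1,H^2,H^3)^t$, $p$, functions of $(t,x,y,z)$, is $$\nabla\cdot\mathbf v=0,\quad \mathbf v_t+(\mathbf v\cdot\nabla)\mathbf v-\mu_0(\mathbf H\times\operatorname{rot}\mathbf H)+\tfrac1\rho\nabla p=\nu\Delta\mathbf v,\quad \nabla\cdot\mathbf H=0,\quad \mathbf H_t=\operatorname{rot}(\mathbf v\times\mathbf H)+\eta\Delta\mathbf H,$$ with $\operatorname{rot}$ the curl and $\Delta$ the componentwise Laplacian in $(x,y,z)$. Here $X,Y,\mathbf e_1,\mathbf e_2$ depend on $t$ through $\alpha(t)=kt+l$. *)

theory Defs
  imports "HOL-Analysis.Analysis"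
begin

type_synonym sfield = "real \<Rightarrow> real \<Rightarrow> real \<Rightarrow> real \<Rightarrow> real"

definition d_t :: "sfield \<Rightarrow> sfield" where
  "d_t f = (\<lambda>t x y z. deriv (\<lambda>s. f s x y z) t)"
definition d_x :: "sfield \<Rightarrow> sfield" where
  "d_x f = (\<lambda>t x y z. deriv (\<lambda>s. f t s y z) x)"
definition d_y :: "sfield \<Rightarrow> sfield" where
  "d_y f = (\<lambda>t x y z. deriv (\<lambda>s. f t x s z) y)"
definition d_z :: "sfield \<Rightarrow> sfield" where
  "d_z f = (\<lambda>t x y z. deriv (\<lambda>s. f t x y s) z)"

definition pd :: "nat \<Rightarrow> sfield \<Rightarrow> sfield" where
  "pd i = (if i = 0 then d_t else if i = 1 then d_x else if i = 2 then d_y else d_z)"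

definition pd_exists :: "nat \<Rightarrow> sfield \<Rightarrow> bool" where
  "pd_exists i f \<longleftrightarrow> (\<forall>t x y z.
     (if i = 0 then (\<lambda>s. f s x y z) differentiable (at t)
      else if i = 1 then (\<lambda>s. f t s y z) differentiable (at x)
      else if i = 2 then (\<lambda>s. f t x s z) differentiable (at y)
      else (\<lambda>s. f t x y s) differentiable (at z)))"

definition smooth4 :: "sfield \<Rightarrow> bool" where
  "smooth4 f \<longleftrightarrow> (\<forall>ds. set ds \<subseteq> {0..3} \<longrightarrow>
     (let g = foldr pd ds f in
        continuous_on UNIV (\<lambda>(t::real, x::real, y::real, z::real). g t x y z) \<and>
        (\<forall>i\<in>{0..3}. pd_exists i g)))"

definition lap :: "sfield \<Rightarrow> sfield" where
  "lap f = (\<lambda>t x y z. d_x (d_x f) t x y z + d_y (d_y f) t x y z + d_z (d_z f) t x y z)"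

definition MHD :: "real \<Rightarrow> real \<Rightarrow> real \<Rightarrow> real \<Rightarrow> sfield \<Rightarrow> sfield \<Rightarrow> sfield \<Rightarrow>
    sfield \<Rightarrow> sfield \<Rightarrow> sfield \<Rightarrow> sfield \<Rightarrow> bool" where
  "MHD \<nu> \<eta> \<mu>0 \<rho> u v w H1 H2 H3 p \<longleftrightarrow> (\<forall>t x y z.
     let R1 = d_y H3 t x y z - d_z H2 t x y z;
         R2 = d_z H1 t x y z - d_x H3 t x y z;
         R3 = d_x H2 t x y z - d_y H1 t x y z;
         E1 = (\<lambda>t x y z. v t x y z * H3 t x y z - w t x y z * H2 t x y z);
         E2 = (\<lambda>t x y z. w t x y z * H1 t x y z - u t x y z * H3 t x y z);
         E3 = (\<lambda>t x y z. u t x y z * H2 t x y z - v t x y z * H1 t x y z);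
         conv = (\<lambda>f. u t x y z * d_x f t x y z + v t x y z * d_y f t x y z
                       + w t x y z * d_z f t x y z)
     in d_x u t x y z + d_y v t x y z + d_z w t x y z = 0
      \<and> d_t u t x y z + conv u
          - \<mu>0 * (H2 t x y z * R3 - H3 t x y z * R2) + d_x p t x y z / \<rho>
          = \<nu> * lap u t x y z
      \<and> d_t v t x y z + conv v
          - \<mu>0 * (H3 t x y z * R1 - H1 t x y z * R3) + d_y p t x y z / \<rho>
          = \<nu> * lap v t x y z
      \<and> d_t w t x y z + conv w
          - \<mu>0 * (H1 t x y z * R2 - H2 t x y z * R1) + d_z p t x y z / \<rho>
          = \<nu> * lap w t x y z
      \<and> d_x H1 t x y z + d_y H2 t x y z + d_z H3 t x y z = 0
      \<and> d_t H1 t x y z = d_y E3 t x y z - d_z E2 t x y z + \<eta> * lap H1 t x y z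
      \<and> d_t H2 t x y z = d_z E1 t x y z - d_x E3 t x y z + \<eta> * lap H2 t x y z
      \<and> d_t H3 t x y z = d_x E2 t x y z - d_y E1 t x y z + \<eta> * lap H3 t x y z)"

definition alpha :: "real \<Rightarrow> real \<Rightarrow> real \<Rightarrow> real" where
  "alpha k l t = k * t + l"
definition bigX :: "real \<Rightarrow> real \<Rightarrow> real \<Rightarrow> real \<Rightarrow> real \<Rightarrow> real" where
  "bigX k l t x y = x * cos (alpha k l t) + y * sin (alpha k l t)"
definition bigY :: "real \<Rightarrow> real \<Rightarrow> real \<Rightarrow> real \<Rightarrow> real \<Rightarrow> real" where
  "bigY k l t x y = - x * sin (alpha k l t) + y * cos (alpha k l t)"

definition phi :: "nat \<Rightarrow> real \<Rightarrow> real \<Rightarrow> real \<Rightarrow> real" where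
  "phi r a1 a Y = (if r = 0 then exp (a1 * Y) - a * exp (- a1 * Y) else sin (a1 * Y))"
definition psi :: "nat \<Rightarrow> real \<Rightarrow> real \<Rightarrow> real \<Rightarrow> real" where
  "psi r a1 a Y = (if r = 0 then exp (a1 * Y) + a * exp (- a1 * Y) else cos (a1 * Y))"
definition xi :: "nat \<Rightarrow> real \<Rightarrow> real \<Rightarrow> real \<Rightarrow> real \<Rightarrow> real" where
  "xi r a1 b c Y = (if r = 0 then b * exp (a1 * Y) - c * exp (- a1 * Y) else c * sin (a1 * Y + b))"
definition zeta :: "nat \<Rightarrow> real \<Rightarrow> real \<Rightarrow> real \<Rightarrow> real \<Rightarrow> real" where
  "zeta r a1 b c Y = (if r = 0 then b * exp (a1 * Y) + c * exp (- a1 * Y) else c * cos (a1 * Y + b))"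
definition vtheta :: "nat \<Rightarrow> real \<Rightarrow> real \<Rightarrow> real \<Rightarrow> real \<Rightarrow> real" where
  "vtheta r a1 b1 c1 Y = (if r = 0 then b1 * exp (a1 * Y) - c1 * exp (- a1 * Y) else c1 * sin (a1 * Y + b1))"

definition W1 :: "nat \<Rightarrow> real \<Rightarrow> real \<Rightarrow> real \<Rightarrow> real \<Rightarrow> real \<Rightarrow> real \<Rightarrow> real \<Rightarrow> real \<Rightarrow> real \<Rightarrow> real" where
  "W1 r a1 a2 a b c b1 c1 X Y = a1 * (vtheta r a1 b1 c1 Y + a2 * Y * phi r a1 a Y
      - X * zeta r a1 b c Y - a1 * a2 * X\<^sup>2 * psi r a1 a Y)"
definition W2 :: "nat \<Rightarrow> real \<Rightarrow> real \<Rightarrow> real \<Rightarrow> real \<Rightarrow> real \<Rightarrow> real \<Rightarrow> real \<Rightarrow> real" where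
  "W2 r a1 a2 a b c X Y = xi r a1 b c Y + 2 * a1 * a2 * X * phi r a1 a Y"

end

theory Submission
  imports Defs
begin


definition pdiff :: "(real\<Rightarrow>real\<Rightarrow>real) \<Rightarrow> (real\<Rightarrow>real\<Rightarrow>real) \<Rightarrow> (real\<Rightarrow>real\<Rightarrow>real) \<Rightarrow> bool" where
"pdiff G GX GY \<longleftrightarrow> (\<forall>X Y. ((\<lambda>q. G (fst q) (snd q)) has_derivative (\<lambda>h. GX X Y * fst h + GY X Y * snd h)) (at (X,Y)))"

lemma chain_gen:
  assumes G: "pdiff G GX GY"
    and f: "((\<lambda>s. (f1 s, f2 s)) has_derivative (\<lambda>h. (h * d1, h * d2))) (at x)"
  shows "((\<lambda>s. G (f1 s) (f2 s)) has_real_derivative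
           (GX (f1 x) (f2 x) * d1 + GY (f1 x) (f2 x) * d2)) (at x)"
proof -
  have g: "((\<lambda>q. G (fst q) (snd q)) has_derivative (\<lambda>h. GX (f1 x) (f2 x) * fst h + GY (f1 x) (f2 x) * snd h)) (at (f1 x, f2 x))"
    using G unfolding pdiff_def by blast
  have "((\<lambda>q. G (fst q) (snd q)) \<circ> (\<lambda>s. (f1 s, f2 s)) has_derivative
     (\<lambda>h. GX (f1 x) (f2 x) * fst h + GY (f1 x) (f2 x) * snd h) \<circ> (\<lambda>h. (h * d1, h * d2))) (at x)"
    by (rule diff_chain_at[OF f]) (use g in simp)
  moreover have "(\<lambda>h. GX (f1 x) (f2 x) * fst h + GY (f1 x) (f2 x) * snd h) \<circ> (\<lambda>h. (h * d1, h * d2))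
     = (*) (GX (f1 x) (f2 x) * d1 + GY (f1 x) (f2 x) * d2)"
    by (auto simp: fun_eq_iff algebra_simps)
  ultimately show ?thesis unfolding has_field_derivative_def by (simp add: o_def)
qed

lemma inner_x: "((\<lambda>s. (bigX k l t s y, bigY k l t s y)) has_derivative
   (\<lambda>h. (h * cos (alpha k l t), h * (- sin (alpha k l t))))) (at x)"
  unfolding bigX_def bigY_def
  by (rule derivative_eq_intros refl | simp)+

lemma inner_y: "((\<lambda>s. (bigX k l t x s, bigY k l t x s)) has_derivative
   (\<lambda>h. (h * sin (alpha k l t), h * cos (alpha k l t)))) (at y)"
  unfolding bigX_def bigY_def
  by (rule derivative_eq_intros refl | simp)+

lemma inner_t: "((\<lambda>s. (bigX k l s x y, bigY k l s x y)) has_derivative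
   (\<lambda>h. (h * (k * bigY k l t x y), h * (- k * bigX k l t x y)))) (at t)"
  unfolding bigX_def bigY_def alpha_def
  apply (rule derivative_eq_intros refl | simp)+
  apply (auto simp: fun_eq_iff algebra_simps)
  done

definition lift :: "real \<Rightarrow> real \<Rightarrow> (real\<Rightarrow>real\<Rightarrow>real) \<Rightarrow> real \<Rightarrow> real \<Rightarrow> real \<Rightarrow> real" where
  "lift k l G t x y = G (bigX k l t x y) (bigY k l t x y)"

lemma lift_dx:
  assumes "pdiff G GX GY"
    and "D = lift k l GX t x y * cos (alpha k l t) - lift k l GY t x y * sin (alpha k l t)"
  shows "((\<lambda>s. lift k l G t s y) has_real_derivative D) (at x)"
  using chain_gen[OF assms(1) inner_x[of k l t y x]] assms(2) unfolding lift_def by simp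

lemma lift_dy:
  assumes "pdiff G GX GY"
    and "D = lift k l GX t x y * sin (alpha k l t) + lift k l GY t x y * cos (alpha k l t)"
  shows "((\<lambda>s. lift k l G t x s) has_real_derivative D) (at y)"
  using chain_gen[OF assms(1) inner_y[of k l t x y]] assms(2) unfolding lift_def by simp

lemma lift_dt:
  assumes "pdiff G GX GY"
    and "D = k * (bigY k l t x y * lift k l GX t x y - bigX k l t x y * lift k l GY t x y)"
  shows "((\<lambda>s. lift k l G s x y) has_real_derivative D) (at t)"
  using chain_gen[OF assms(1) inner_t[of k l x y t]] unfolding assms(2) lift_def by (simp add: algebra_simps)

lemma alpha_deriv[derivative_intros]: "((\<lambda>s. alpha k l s) has_real_derivative k) (at t)"
  unfolding alpha_def by (rule derivative_eq_intros refl | simp)+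





locale mhdgen =
  fixes k l C1 C2 \<nu> \<eta> \<mu>0 \<rho> lam :: real
  and w1 w2 w1X w1Y w2X w2Y w1XX w1XY w1YX w1YY w2XX w2XY w2YX w2YY S :: "real \<Rightarrow> real \<Rightarrow> real"
  assumes p1: "pdiff w1 w1X w1Y" and p2: "pdiff w2 w2X w2Y"
    and p1X: "pdiff w1X w1XX w1XY" and p1Y: "pdiff w1Y w1YX w1YY"
    and p2X: "pdiff w2X w2XX w2XY" and p2Y: "pdiff w2Y w2YX w2YY"
    and pS: "pdiff S (\<lambda>X Y. - w2 X Y) w1"
    and div: "\<And>X Y. w1X X Y + w2Y X Y = 0"
    and lap1: "\<And>X Y. w1XX X Y + w1YY X Y = lam * w1 X Y"
    and lap2: "\<And>X Y. w2XX X Y + w2YY X Y = lam * w2 X Y"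
    and curl: "\<And>X Y. w2X X Y - w1Y X Y = - lam * S X Y"
    and rho: "\<rho> \<noteq> 0"
begin

abbreviation "L G t x y \<equiv> lift k l G t x y"
abbreviation "c t \<equiv> cos (alpha k l t)"
abbreviation "sn t \<equiv> sin (alpha k l t)"

lemmas lr = lift_dx[OF p1] lift_dx[OF p2] lift_dy[OF p1] lift_dy[OF p2]
  lift_dt[OF p1] lift_dt[OF p2]
  lift_dx[OF p1X] lift_dx[OF p2X] lift_dy[OF p1X] lift_dy[OF p2X]
  lift_dx[OF p1Y] lift_dx[OF p2Y] lift_dy[OF p1Y] lift_dy[OF p2Y]
  lift_dx[OF pS] lift_dy[OF pS]

definition "G1 a b C q = (\<lambda>t x y z. a * x + b * y + C * exp (q * t) * (L w1 t x y * c t - L w2 t x y * sn t))"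
definition "G2 a b C q = (\<lambda>t x y z. a * x + b * y + C * exp (q * t) * (L w1 t x y * sn t + L w2 t x y * c t))"

definition "G1x a C q = (\<lambda>t x y z. a + C * exp (q * t) * ((L w1X t x y * c t - L w1Y t x y * sn t) * c t
   - (L w2X t x y * c t - L w2Y t x y * sn t) * sn t))"
definition "G1y b C q = (\<lambda>t x y z. b + C * exp (q * t) * ((L w1X t x y * sn t + L w1Y t x y * c t) * c t
   - (L w2X t x y * sn t + L w2Y t x y * c t) * sn t))"
definition "G2x a C q = (\<lambda>t x y z. a + C * exp (q * t) * ((L w1X t x y * c t - L w1Y t x y * sn t) * sn t
   + (L w2X t x y * c t - L w2Y t x y * sn t) * c t))"
definition "G2y b C q = (\<lambda>t x y z. b + C * exp (q * t) * ((L w1X t x y * sn t + L w1Y t x y * c t) * sn t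
   + (L w2X t x y * sn t + L w2Y t x y * c t) * c t))"

lemma G1_Dx: "D = G1x a C q t x y z \<Longrightarrow> ((\<lambda>s. G1 a b C q t s y z) has_real_derivative D) (at x)"
  unfolding G1_def G1x_def
  apply (rule derivative_eq_intros lr | rule refl)+
  apply (simp add: algebra_simps)
  done
lemma G1_Dy: "D = G1y b C q t x y z \<Longrightarrow> ((\<lambda>s. G1 a b C q t x s z) has_real_derivative D) (at y)"
  unfolding G1_def G1y_def
  apply (rule derivative_eq_intros lr | rule refl)+
  apply (simp add: algebra_simps)
  done
lemma G2_Dx: "D = G2x a C q t x y z \<Longrightarrow> ((\<lambda>s. G2 a b C q t s y z) has_real_derivative D) (at x)"
  unfolding G2_def G2x_def
  apply (rule derivative_eq_intros lr | rule refl)+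
  apply (simp add: algebra_simps)
  done
lemma G2_Dy: "D = G2y b C q t x y z \<Longrightarrow> ((\<lambda>s. G2 a b C q t x s z) has_real_derivative D) (at y)"
  unfolding G2_def G2y_def
  apply (rule derivative_eq_intros lr | rule refl)+
  apply (simp add: algebra_simps)
  done

lemma G1_Dt: "((\<lambda>s. G1 a b C q s x y z) has_real_derivative
   C * (q * exp (q * t)) * (L w1 t x y * c t - L w2 t x y * sn t)
   + C * exp (q * t) * ((k * (bigY k l t x y * L w1X t x y - bigX k l t x y * L w1Y t x y)) * c t
        - L w1 t x y * (sn t * k)
        - ((k * (bigY k l t x y * L w2X t x y - bigX k l t x y * L w2Y t x y)) * sn t
        + L w2 t x y * (c t * k)))) (at t)"
  unfolding G1_def
  apply (rule derivative_eq_intros lr | rule refl)+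
  apply (simp add: algebra_simps)
  done

lemma G2_Dt: "((\<lambda>s. G2 a b C q s x y z) has_real_derivative
   C * (q * exp (q * t)) * (L w1 t x y * sn t + L w2 t x y * c t)
   + C * exp (q * t) * ((k * (bigY k l t x y * L w1X t x y - bigX k l t x y * L w1Y t x y)) * sn t
        + L w1 t x y * (c t * k)
        + ((k * (bigY k l t x y * L w2X t x y - bigX k l t x y * L w2Y t x y)) * c t
        - L w2 t x y * (sn t * k)))) (at t)"
  unfolding G2_def
  apply (rule derivative_eq_intros lr | rule refl)+
  apply (simp add: algebra_simps)
  done

lemma G1x_Dx: "((\<lambda>s. G1x a C q t s y z) has_real_derivative
   C * exp (q * t) * (((L w1XX t x y * c t - L w1XY t x y * sn t) * c t - (L w1YX t x y * c t - L w1YY t x y * sn t) * sn t) * c t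
   - ((L w2XX t x y * c t - L w2XY t x y * sn t) * c t - (L w2YX t x y * c t - L w2YY t x y * sn t) * sn t) * sn t)) (at x)"
  unfolding G1x_def
  apply (rule derivative_eq_intros lr | rule refl)+
  apply (simp add: algebra_simps)
  done

lemma G1y_Dy: "((\<lambda>s. G1y b C q t x s z) has_real_derivative
   C * exp (q * t) * (((L w1XX t x y * sn t + L w1XY t x y * c t) * sn t + (L w1YX t x y * sn t + L w1YY t x y * c t) * c t) * c t
   - ((L w2XX t x y * sn t + L w2XY t x y * c t) * sn t + (L w2YX t x y * sn t + L w2YY t x y * c t) * c t) * sn t)) (at y)"
  unfolding G1y_def
  apply (rule derivative_eq_intros lr | rule refl)+
  apply (simp add: algebra_simps)
  done

lemma G2x_Dx: "((\<lambda>s. G2x a C q t s y z) has_real_derivative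
   C * exp (q * t) * (((L w1XX t x y * c t - L w1XY t x y * sn t) * c t - (L w1YX t x y * c t - L w1YY t x y * sn t) * sn t) * sn t
   + ((L w2XX t x y * c t - L w2XY t x y * sn t) * c t - (L w2YX t x y * c t - L w2YY t x y * sn t) * sn t) * c t)) (at x)"
  unfolding G2x_def
  apply (rule derivative_eq_intros lr | rule refl)+
  apply (simp add: algebra_simps)
  done

lemma G2y_Dy: "((\<lambda>s. G2y b C q t x s z) has_real_derivative
   C * exp (q * t) * (((L w1XX t x y * sn t + L w1XY t x y * c t) * sn t + (L w1YX t x y * sn t + L w1YY t x y * c t) * c t) * sn t
   + ((L w2XX t x y * sn t + L w2XY t x y * c t) * sn t + (L w2YX t x y * sn t + L w2YY t x y * c t) * c t) * c t)) (at y)"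
  unfolding G2y_def
  apply (rule derivative_eq_intros lr | rule refl)+
  apply (simp add: algebra_simps)
  done

lemma dx_G1: "d_x (G1 a b C q) = G1x a C q"
  unfolding d_x_def by (intro ext DERIV_imp_deriv G1_Dx refl)
lemma dy_G1: "d_y (G1 a b C q) = G1y b C q"
  unfolding d_y_def by (intro ext DERIV_imp_deriv G1_Dy refl)
lemma dx_G2: "d_x (G2 a b C q) = G2x a C q"
  unfolding d_x_def by (intro ext DERIV_imp_deriv G2_Dx refl)
lemma dy_G2: "d_y (G2 a b C q) = G2y b C q"
  unfolding d_y_def by (intro ext DERIV_imp_deriv G2_Dy refl)
lemma dz_G1: "d_z (G1 a b C q) = (\<lambda>t x y z. 0)"
  unfolding d_z_def G1_def by simp
lemma dz_G2: "d_z (G2 a b C q) = (\<lambda>t x y z. 0)"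
  unfolding d_z_def G2_def by simp
lemma dz0: "d_z (\<lambda>t x y z. 0) = (\<lambda>t x y z. 0)" "d_x (\<lambda>t x y z. 0) = (\<lambda>t x y z. 0)"
  "d_y (\<lambda>t x y z. 0) = (\<lambda>t x y z. 0)" "d_t (\<lambda>t x y z. 0) = (\<lambda>t x y z. 0)"
  unfolding d_z_def d_x_def d_y_def d_t_def by simp_all

lemma sc1: "sn t ^ 2 = 1 - c t ^ 2" by (simp add: sin_squared_eq)

lemma lap_G1: "lap (G1 a b C q) = (\<lambda>t x y z. lam * C * exp (q * t) * (L w1 t x y * c t - L w2 t x y * sn t))"
proof (intro ext)
  fix t x y z
  have "lap (G1 a b C q) t x y z = d_x (G1x a C q) t x y z + d_y (G1y b C q) t x y z"
    unfolding lap_def dx_G1 dy_G1 dz_G1 dz0 by simp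
  also have "\<dots> = lam * C * exp (q * t) * (L w1 t x y * c t - L w2 t x y * sn t)"
    unfolding d_x_def d_y_def
    apply (simp only: DERIV_imp_deriv[OF G1x_Dx] DERIV_imp_deriv[OF G1y_Dy])
    using lap1[of "bigX k l t x y" "bigY k l t x y"] lap2[of "bigX k l t x y" "bigY k l t x y"] sc1[of t]
    unfolding lift_def by algebra
  finally show "lap (G1 a b C q) t x y z = lam * C * exp (q * t) * (L w1 t x y * c t - L w2 t x y * sn t)" .
qed

lemma lap_G2: "lap (G2 a b C q) = (\<lambda>t x y z. lam * C * exp (q * t) * (L w1 t x y * sn t + L w2 t x y * c t))"
proof (intro ext)
  fix t x y z
  have "lap (G2 a b C q) t x y z = d_x (G2x a C q) t x y z + d_y (G2y b C q) t x y z"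
    unfolding lap_def dx_G2 dy_G2 dz_G2 dz0 by simp
  also have "\<dots> = lam * C * exp (q * t) * (L w1 t x y * sn t + L w2 t x y * c t)"
    unfolding d_x_def d_y_def
    apply (simp only: DERIV_imp_deriv[OF G2x_Dx] DERIV_imp_deriv[OF G2y_Dy])
    using lap1[of "bigX k l t x y" "bigY k l t x y"] lap2[of "bigX k l t x y" "bigY k l t x y"] sc1[of t]
    unfolding lift_def by algebra
  finally show "lap (G2 a b C q) t x y z = lam * C * exp (q * t) * (L w1 t x y * sn t + L w2 t x y * c t)" .
qed

lemma dt_G1: "d_t (G1 a b C q) = (\<lambda>t x y z. C * (q * exp (q * t)) * (L w1 t x y * c t - L w2 t x y * sn t)
   + C * exp (q * t) * ((k * (bigY k l t x y * L w1X t x y - bigX k l t x y * L w1Y t x y)) * c t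
        - L w1 t x y * (sn t * k)
        - ((k * (bigY k l t x y * L w2X t x y - bigX k l t x y * L w2Y t x y)) * sn t
        + L w2 t x y * (c t * k))))"
  unfolding d_t_def by (intro ext DERIV_imp_deriv G1_Dt)
lemma dt_G2: "d_t (G2 a b C q) = (\<lambda>t x y z. C * (q * exp (q * t)) * (L w1 t x y * sn t + L w2 t x y * c t)
   + C * exp (q * t) * ((k * (bigY k l t x y * L w1X t x y - bigX k l t x y * L w1Y t x y)) * sn t
        + L w1 t x y * (c t * k)
        + ((k * (bigY k l t x y * L w2X t x y - bigX k l t x y * L w2Y t x y)) * c t
        - L w2 t x y * (sn t * k))))"
  unfolding d_t_def by (intro ext DERIV_imp_deriv G2_Dt)

definition "P = (\<lambda>t x y z. \<rho> * (k^2 * (x^2 + y^2) / 2 - 2 * k * C1 * exp (\<nu> * lam * t) * L S t x y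
   - (C1^2 * exp (\<nu> * lam * t)^2 + \<mu>0 * C2^2 * exp (\<eta> * lam * t)^2) * ((L w1 t x y ^ 2 + L w2 t x y ^ 2) / 2 - lam * L S t x y ^ 2 / 2)
   + \<mu>0 * C2^2 * exp (\<eta> * lam * t)^2 * (L w1 t x y ^ 2 + L w2 t x y ^ 2) / 2))"

lemma Px: "d_x P t x y z = \<rho> * (k^2 * x - 2 * k * C1 * exp (\<nu> * lam * t) * (- L w2 t x y * c t - L w1 t x y * sn t)
   - (C1^2 * exp (\<nu> * lam * t)^2 + \<mu>0 * C2^2 * exp (\<eta> * lam * t)^2) *
      ((L w1 t x y * (L w1X t x y * c t - L w1Y t x y * sn t) + L w2 t x y * (L w2X t x y * c t - L w2Y t x y * sn t))
       - lam * L S t x y * (- L w2 t x y * c t - L w1 t x y * sn t))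
   + \<mu>0 * C2^2 * exp (\<eta> * lam * t)^2 * (L w1 t x y * (L w1X t x y * c t - L w1Y t x y * sn t) + L w2 t x y * (L w2X t x y * c t - L w2Y t x y * sn t)))"
  unfolding d_x_def P_def
  apply (rule DERIV_imp_deriv)
  apply (rule derivative_eq_intros lr | rule refl | simp)+
  apply (simp add: lift_def field_simps power2_eq_square)
  done

lemma Py: "d_y P t x y z = \<rho> * (k^2 * y - 2 * k * C1 * exp (\<nu> * lam * t) * (- L w2 t x y * sn t + L w1 t x y * c t)
   - (C1^2 * exp (\<nu> * lam * t)^2 + \<mu>0 * C2^2 * exp (\<eta> * lam * t)^2) *
      ((L w1 t x y * (L w1X t x y * sn t + L w1Y t x y * c t) + L w2 t x y * (L w2X t x y * sn t + L w2Y t x y * c t))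
       - lam * L S t x y * (- L w2 t x y * sn t + L w1 t x y * c t))
   + \<mu>0 * C2^2 * exp (\<eta> * lam * t)^2 * (L w1 t x y * (L w1X t x y * sn t + L w1Y t x y * c t) + L w2 t x y * (L w2X t x y * sn t + L w2Y t x y * c t)))"
  unfolding d_y_def P_def
  apply (rule DERIV_imp_deriv)
  apply (rule derivative_eq_intros lr | rule refl | simp)+
  apply (simp add: lift_def field_simps power2_eq_square)
  done

lemma Pz: "d_z P = (\<lambda>t x y z. 0)"
  unfolding d_z_def P_def by simp

abbreviation "U \<equiv> G1 0 (-k) C1 (\<nu>*lam)"
abbreviation "V \<equiv> G2 k 0 C1 (\<nu>*lam)"
abbreviation "HA \<equiv> G1 0 0 C2 (\<eta>*lam)"
abbreviation "HB \<equiv> G2 0 0 C2 (\<eta>*lam)"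

lemma E3x: "d_x (\<lambda>t x y z. U t x y z * HB t x y z - V t x y z * HA t x y z) t x y z
  = G1x 0 C1 (\<nu>*lam) t x y z * HB t x y z + U t x y z * G2x 0 C2 (\<eta>*lam) t x y z
   - (G2x k C1 (\<nu>*lam) t x y z * HA t x y z + V t x y z * G1x 0 C2 (\<eta>*lam) t x y z)"
  unfolding d_x_def
  apply (rule DERIV_imp_deriv)
  apply (rule derivative_eq_intros G1_Dx G2_Dx | rule refl)+
  apply (simp add: algebra_simps)
  done

lemma E3y: "d_y (\<lambda>t x y z. U t x y z * HB t x y z - V t x y z * HA t x y z) t x y z
  = G1y (-k) C1 (\<nu>*lam) t x y z * HB t x y z + U t x y z * G2y 0 C2 (\<eta>*lam) t x y z
   - (G2y 0 C1 (\<nu>*lam) t x y z * HA t x y z + V t x y z * G1y 0 C2 (\<eta>*lam) t x y z)"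
  unfolding d_y_def
  apply (rule DERIV_imp_deriv)
  apply (rule derivative_eq_intros G1_Dy G2_Dy | rule refl)+
  apply (simp add: algebra_simps)
  done

lemma hxy: "x = bigX k l t x y * c t - bigY k l t x y * sn t"
   "y = bigX k l t x y * sn t + bigY k l t x y * c t"
  unfolding bigX_def bigY_def
  by (simp_all add: algebra_simps flip: power2_eq_square, simp_all add: distrib_left[symmetric] sin_squared_eq)

lemma lap0: "lap (\<lambda>t x y z. 0) = (\<lambda>t x y z. 0)"
  unfolding lap_def dz0 by simp

lemma mhd: "MHD \<nu> \<eta> \<mu>0 \<rho> U V (\<lambda>t x y z. 0) HA HB (\<lambda>t x y z. 0) P"
  unfolding MHD_def Let_def
  apply (intro allI)
  subgoal for t x y z
    using div[of "bigX k l t x y" "bigY k l t x y"] curl[of "bigX k l t x y" "bigY k l t x y"]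
      hxy[where x=x and y=y and t=t] sin_cos_squared_add[of "alpha k l t"]
    apply (simp only: mult_zero_left mult_zero_right diff_zero E3x E3y dx_G1 dy_G1 dx_G2 dy_G2 dz_G1 dz_G2 dz0 dt_G1 dt_G2 lap_G1 lap_G2 Px Py Pz
       nonzero_mult_div_cancel_left[OF rho] lap0)
    apply (simp only: G1_def G2_def G1x_def G1y_def G2x_def G2y_def lift_def)
    apply (intro conjI)
    apply (simp only: add_0_left add_0_right diff_zero mult_zero_right mult_zero_left; fail | algebra)+
    done
  done

end



inductive_set SM :: "sfield set" where
  SMc: "(\<lambda>t x y z. a) \<in> SM"
| SMt: "(\<lambda>t x y z. t) \<in> SM"
| SMx: "(\<lambda>t x y z. x) \<in> SM"
| SMy: "(\<lambda>t x y z. y) \<in> SM"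
| SMz: "(\<lambda>t x y z. z) \<in> SM"
| SMadd: "f \<in> SM \<Longrightarrow> g \<in> SM \<Longrightarrow> (\<lambda>t x y z. f t x y z + g t x y z) \<in> SM"
| SMmul: "f \<in> SM \<Longrightarrow> g \<in> SM \<Longrightarrow> (\<lambda>t x y z. f t x y z * g t x y z) \<in> SM"
| SMexp: "f \<in> SM \<Longrightarrow> (\<lambda>t x y z. exp (f t x y z)) \<in> SM"
| SMsin: "f \<in> SM \<Longrightarrow> (\<lambda>t x y z. sin (f t x y z)) \<in> SM"
| SMcos: "f \<in> SM \<Longrightarrow> (\<lambda>t x y z. cos (f t x y z)) \<in> SM"

definition slice :: "nat \<Rightarrow> sfield \<Rightarrow> real \<Rightarrow> real \<Rightarrow> real \<Rightarrow> real \<Rightarrow> real \<Rightarrow> real" where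
  "slice i f t x y z = (\<lambda>s. if i = 0 then f s x y z else if i = 1 then f t s y z
      else if i = 2 then f t x s z else f t x y s)"
definition coord :: "nat \<Rightarrow> real \<Rightarrow> real \<Rightarrow> real \<Rightarrow> real \<Rightarrow> real" where
  "coord i t x y z = (if i = 0 then t else if i = 1 then x else if i = 2 then y else z)"

lemma pd_eq: "pd i f t x y z = deriv (slice i f t x y z) (coord i t x y z)"
  unfolding pd_def slice_def coord_def d_t_def d_x_def d_y_def d_z_def by auto

lemma pd_exists_eq: "pd_exists i f \<longleftrightarrow> (\<forall>t x y z. slice i f t x y z differentiable (at (coord i t x y z)))"
  unfolding pd_exists_def slice_def coord_def by auto

lemma slice_simps:
  "slice i (\<lambda>t x y z. f t x y z + g t x y z) t x y z = (\<lambda>s. slice i f t x y z s + slice i g t x y z s)"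
  "slice i (\<lambda>t x y z. f t x y z * g t x y z) t x y z = (\<lambda>s. slice i f t x y z s * slice i g t x y z s)"
  "slice i (\<lambda>t x y z. exp (f t x y z)) t x y z = (\<lambda>s. exp (slice i f t x y z s))"
  "slice i (\<lambda>t x y z. sin (f t x y z)) t x y z = (\<lambda>s. sin (slice i f t x y z s))"
  "slice i (\<lambda>t x y z. cos (f t x y z)) t x y z = (\<lambda>s. cos (slice i f t x y z s))"
  "slice i (\<lambda>t x y z. a) t x y z = (\<lambda>s. a)"
  unfolding slice_def by auto

lemma slice_coord: "slice i f t x y z (coord i t x y z) = f t x y z"
  unfolding slice_def coord_def by auto

lemma pd_SM_aux:
  assumes "f \<in> SM"
  shows "(\<forall>i t x y z. (slice i f t x y z has_real_derivative pd i f t x y z) (at (coord i t x y z))) \<and> (\<forall>i. pd i f \<in> SM)"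
  using assms
proof induction
  case (SMc a)
  have d: "\<And>i t x y z. pd i (\<lambda>t x y z. a) t x y z = 0"
    unfolding pd_eq slice_simps by simp
  show ?case unfolding slice_simps d by (auto intro: SM.intros)
next
  case SMt
  have e: "\<And>i t x y z. slice i (\<lambda>t x y z. t) t x y z = (\<lambda>s. if i = 0 then s else t)"
    unfolding slice_def by auto
  have D: "\<And>i t x y z. (slice i (\<lambda>t x y z. t) t x y z has_real_derivative (if i = 0 then 1 else 0)) (at (coord i t x y z))"
    unfolding e by (auto intro!: derivative_eq_intros)
  have d: "\<And>i t x y z. pd i (\<lambda>t x y z. t) t x y z = (if i = 0 then 1 else 0)"
    unfolding pd_eq using D by (rule DERIV_imp_deriv)
  show ?case using D unfolding d by (auto intro: SM.intros)
next
  case SMx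
  have e: "\<And>i t x y z. slice i (\<lambda>t x y z. x) t x y z = (\<lambda>s. if i = 1 then s else x)"
    unfolding slice_def by auto
  have D: "\<And>i t x y z. (slice i (\<lambda>t x y z. x) t x y z has_real_derivative (if i = 1 then 1 else 0)) (at (coord i t x y z))"
    unfolding e by (auto intro!: derivative_eq_intros simp: coord_def)
  have d: "\<And>i t x y z. pd i (\<lambda>t x y z. x) t x y z = (if i = 1 then 1 else 0)"
    unfolding pd_eq using D by (rule DERIV_imp_deriv)
  show ?case using D unfolding d by (auto intro: SM.intros)
next
  case SMy
  have e: "\<And>i t x y z. slice i (\<lambda>t x y z. y) t x y z = (\<lambda>s. if i = 2 then s else y)"
    unfolding slice_def by auto
  have D: "\<And>i t x y z. (slice i (\<lambda>t x y z. y) t x y z has_real_derivative (if i = 2 then 1 else 0)) (at (coord i t x y z))"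
    unfolding e by (auto intro!: derivative_eq_intros simp: coord_def)
  have d: "\<And>i t x y z. pd i (\<lambda>t x y z. y) t x y z = (if i = 2 then 1 else 0)"
    unfolding pd_eq using D by (rule DERIV_imp_deriv)
  show ?case using D unfolding d by (auto intro: SM.intros)
next
  case SMz
  have e: "\<And>i t x y z. slice i (\<lambda>t x y z. z) t x y z = (\<lambda>s. if i \<ge> 3 then s else z)"
    unfolding slice_def by auto
  have D: "\<And>i t x y z. (slice i (\<lambda>t x y z. z) t x y z has_real_derivative (if i \<ge> 3 then 1 else 0)) (at (coord i t x y z))"
    unfolding e by (auto intro!: derivative_eq_intros simp: coord_def)
  have d: "\<And>i t x y z. pd i (\<lambda>t x y z. z) t x y z = (if i \<ge> 3 then 1 else 0)"
    unfolding pd_eq using D by (rule DERIV_imp_deriv)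
  show ?case using D unfolding d by (auto intro: SM.intros)
next
  case (SMadd f g)
  have D: "\<And>i t x y z. (slice i (\<lambda>t x y z. f t x y z + g t x y z) t x y z has_real_derivative
      pd i f t x y z + pd i g t x y z) (at (coord i t x y z))"
    unfolding slice_simps using SMadd.IH by (auto intro!: derivative_eq_intros)
  have d: "\<And>i. pd i (\<lambda>t x y z. f t x y z + g t x y z) = (\<lambda>t x y z. pd i f t x y z + pd i g t x y z)"
    unfolding pd_eq[abs_def] using D by (intro ext DERIV_imp_deriv) (simp add: pd_eq)
  show ?case using D SMadd.IH unfolding d by (auto intro: SM.intros)
next
  case (SMmul f g)
  have IHf: "\<And>i t x y z. (slice i f t x y z has_real_derivative pd i f t x y z) (at (coord i t x y z))"
    using SMmul.IH by blast
  have IHg: "\<And>i t x y z. (slice i g t x y z has_real_derivative pd i g t x y z) (at (coord i t x y z))"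
    using SMmul.IH by blast
  have D: "\<And>i t x y z. (slice i (\<lambda>t x y z. f t x y z * g t x y z) t x y z has_real_derivative
      pd i f t x y z * g t x y z + f t x y z * pd i g t x y z) (at (coord i t x y z))"
    unfolding slice_simps
    apply (rule derivative_eq_intros IHf IHg | rule refl)+
    apply (simp add: slice_coord)
    done
  have d: "\<And>i. pd i (\<lambda>t x y z. f t x y z * g t x y z) = (\<lambda>t x y z. pd i f t x y z * g t x y z + f t x y z * pd i g t x y z)"
    using D by (intro ext) (simp add: pd_eq DERIV_imp_deriv)
  show ?case using D SMmul.IH SMmul.hyps unfolding d by (auto intro!: SM.intros)
next
  case (SMexp f)
  have IHf: "\<And>i t x y z. (slice i f t x y z has_real_derivative pd i f t x y z) (at (coord i t x y z))"
    using SMexp.IH by blast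
  have D: "\<And>i t x y z. (slice i (\<lambda>t x y z. exp (f t x y z)) t x y z has_real_derivative
      exp (f t x y z) * pd i f t x y z) (at (coord i t x y z))"
    unfolding slice_simps
    apply (rule derivative_eq_intros IHf | rule refl)+
    apply (simp add: slice_coord)
    done
  have d: "\<And>i. pd i (\<lambda>t x y z. exp (f t x y z)) = (\<lambda>t x y z. exp (f t x y z) * pd i f t x y z)"
    using D by (intro ext) (simp add: pd_eq DERIV_imp_deriv)
  show ?case using D SMexp.IH SMexp.hyps unfolding d by (auto intro!: SM.intros)
next
  case (SMsin f)
  have IHf: "\<And>i t x y z. (slice i f t x y z has_real_derivative pd i f t x y z) (at (coord i t x y z))"
    using SMsin.IH by blast
  have D: "\<And>i t x y z. (slice i (\<lambda>t x y z. sin (f t x y z)) t x y z has_real_derivative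
      cos (f t x y z) * pd i f t x y z) (at (coord i t x y z))"
    unfolding slice_simps
    apply (rule derivative_eq_intros IHf | rule refl)+
    apply (simp add: slice_coord)
    done
  have d: "\<And>i. pd i (\<lambda>t x y z. sin (f t x y z)) = (\<lambda>t x y z. cos (f t x y z) * pd i f t x y z)"
    using D by (intro ext) (simp add: pd_eq DERIV_imp_deriv)
  show ?case using D SMsin.IH SMsin.hyps unfolding d by (auto intro!: SM.intros)
next
  case (SMcos f)
  have IHf: "\<And>i t x y z. (slice i f t x y z has_real_derivative pd i f t x y z) (at (coord i t x y z))"
    using SMcos.IH by blast
  have D: "\<And>i t x y z. (slice i (\<lambda>t x y z. cos (f t x y z)) t x y z has_real_derivative
      (-1) * sin (f t x y z) * pd i f t x y z) (at (coord i t x y z))"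
    unfolding slice_simps
    apply (rule derivative_eq_intros IHf | rule refl)+
    apply (simp add: slice_coord)
    done
  have d: "\<And>i. pd i (\<lambda>t x y z. cos (f t x y z)) = (\<lambda>t x y z. (-1) * sin (f t x y z) * pd i f t x y z)"
    using D by (intro ext) (simp add: pd_eq DERIV_imp_deriv)
  have m: "\<And>i. (\<lambda>t x y z. (-1) * sin (f t x y z) * pd i f t x y z) \<in> SM"
    using SMcos.IH SMcos.hyps by (intro SM.intros) auto
  show ?case using D m unfolding d by blast
qed

lemma SM_cont: "f \<in> SM \<Longrightarrow> continuous_on UNIV (\<lambda>(t::real, x::real, y::real, z::real). f t x y z)"
proof (induction rule: SM.induct)
  case (SMadd f g)
  then show ?case
    using continuous_on_add[OF SMadd.IH] by (simp add: case_prod_beta)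
next
  case (SMmul f g)
  then show ?case
    using continuous_on_mult[OF SMmul.IH] by (simp add: case_prod_beta)
next
  case (SMexp f)
  then show ?case
    using continuous_on_exp[OF SMexp.IH] by (simp add: case_prod_beta)
next
  case (SMsin f)
  then show ?case
    using continuous_on_sin[OF SMsin.IH] by (simp add: case_prod_beta)
next
  case (SMcos f)
  then show ?case
    using continuous_on_cos[OF SMcos.IH] by (simp add: case_prod_beta)
qed (auto simp: case_prod_beta intro!: continuous_intros)

lemma SM_smooth: assumes "f \<in> SM" shows "smooth4 f"
proof -
  have fo: "foldr pd ds f \<in> SM" for ds
    by (induction ds) (use assms pd_SM_aux in auto)
  show ?thesis unfolding smooth4_def Let_def
  proof (intro allI impI conjI ballI)
    fix ds :: "nat list" and i :: nat
    show "continuous_on UNIV (\<lambda>(t, x, y, z). foldr pd ds f t x y z)" using SM_cont[OF fo] .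
    show "pd_exists i (foldr pd ds f)"
      unfolding pd_exists_eq using pd_SM_aux[OF fo[of ds]] real_differentiable_def by blast
  qed
qed

lemma SMdiff: "f \<in> SM \<Longrightarrow> g \<in> SM \<Longrightarrow> (\<lambda>t x y z. f t x y z - g t x y z) \<in> SM"
proof -
  assume f: "f \<in> SM" and g: "g \<in> SM"
  have "(\<lambda>t x y z. f t x y z + (-1) * g t x y z) \<in> SM" by (intro SM.intros f g)
  then show ?thesis by simp
qed
lemma SMminus: "f \<in> SM \<Longrightarrow> (\<lambda>t x y z. - f t x y z) \<in> SM"
proof -
  assume f: "f \<in> SM"
  have "(\<lambda>t x y z. (-1) * f t x y z) \<in> SM" by (intro SM.intros f)
  then show ?thesis by simp
qed
lemma SMdiv: "f \<in> SM \<Longrightarrow> (\<lambda>t x y z. f t x y z / a) \<in> SM"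
proof -
  assume f: "f \<in> SM"
  have "(\<lambda>t x y z. f t x y z * (1 / a)) \<in> SM" by (intro SM.intros f)
  then show ?thesis by simp
qed
lemma SMpow: "f \<in> SM \<Longrightarrow> (\<lambda>t x y z. f t x y z ^ n) \<in> SM"
  by (induction n) (auto intro: SM.intros)





definition sg :: "nat \<Rightarrow> real" where "sg r = (if r = 0 then 1 else -1)"
definition th2 :: "nat \<Rightarrow> real \<Rightarrow> real \<Rightarrow> real \<Rightarrow> real \<Rightarrow> real" where
  "th2 r a1 b1 c1 Y = (if r = 0 then b1 * exp (a1 * Y) + c1 * exp (- a1 * Y) else c1 * cos (a1 * Y + b1))"

lemma sgsq: "sg r * sg r = 1" unfolding sg_def by simp

lemma phi_D: "D = a1 * psi r a1 a Y \<Longrightarrow> ((\<lambda>Y. phi r a1 a Y) has_real_derivative D) (at Y)"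
  unfolding phi_def psi_def
  by (cases "r = 0") (auto intro!: derivative_eq_intros simp: algebra_simps)
lemma psi_D: "D = sg r * a1 * phi r a1 a Y \<Longrightarrow> ((\<lambda>Y. psi r a1 a Y) has_real_derivative D) (at Y)"
  unfolding phi_def psi_def sg_def
  by (cases "r = 0") (auto intro!: derivative_eq_intros simp: algebra_simps)
lemma xi_D: "D = a1 * zeta r a1 b c Y \<Longrightarrow> ((\<lambda>Y. xi r a1 b c Y) has_real_derivative D) (at Y)"
  unfolding xi_def zeta_def
  by (cases "r = 0") (auto intro!: derivative_eq_intros simp: algebra_simps)
lemma zeta_D: "D = sg r * a1 * xi r a1 b c Y \<Longrightarrow> ((\<lambda>Y. zeta r a1 b c Y) has_real_derivative D) (at Y)"
  unfolding xi_def zeta_def sg_def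
  by (cases "r = 0") (auto intro!: derivative_eq_intros simp: algebra_simps)
lemma vt_D: "D = a1 * th2 r a1 b1 c1 Y \<Longrightarrow> ((\<lambda>Y. vtheta r a1 b1 c1 Y) has_real_derivative D) (at Y)"
  unfolding vtheta_def th2_def
  by (cases "r = 0") (auto intro!: derivative_eq_intros simp: algebra_simps)
lemma th2_D: "D = sg r * a1 * vtheta r a1 b1 c1 Y \<Longrightarrow> ((\<lambda>Y. th2 r a1 b1 c1 Y) has_real_derivative D) (at Y)"
  unfolding vtheta_def th2_def sg_def
  by (cases "r = 0") (auto intro!: derivative_eq_intros simp: algebra_simps)

lemmas oneD = phi_D psi_D xi_D zeta_D vt_D th2_D

lemma pdiff_poly:
  assumes da: "\<And>Y. (fa has_real_derivative ga Y) (at Y)"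
    and db: "\<And>Y. (fb has_real_derivative gb Y) (at Y)"
    and dc: "\<And>Y. (fc has_real_derivative gc Y) (at Y)"
    and G: "\<And>X Y. G X Y = fa Y + X * fb Y + X^2 * fc Y"
    and GX: "\<And>X Y. GX X Y = fb Y + 2 * X * fc Y"
    and GY: "\<And>X Y. GY X Y = ga Y + X * gb Y + X^2 * gc Y"
  shows "pdiff G GX GY"
  unfolding pdiff_def G GX GY
proof (intro allI)
  fix X Y :: real
  show "((\<lambda>q. fa (snd q) + fst q * fb (snd q) + (fst q)\<^sup>2 * fc (snd q)) has_derivative
         (\<lambda>h. (fb Y + 2 * X * fc Y) * fst h + (ga Y + X * gb Y + X\<^sup>2 * gc Y) * snd h)) (at (X, Y))"
    apply (rule has_derivative_eq_rhs)
     apply (rule derivative_intros DERIV_compose_FDERIV[OF da] DERIV_compose_FDERIV[OF db]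
        DERIV_compose_FDERIV[OF dc])+
    apply (simp add: fun_eq_iff algebra_simps power2_eq_square power3_eq_cube power4_eq_xxxx)
    done
qed

context fixes r :: nat and a1 a2 a b c b1 c1 :: real begin
definition "Cw1 = (\<lambda>X Y. W1 r a1 a2 a b c b1 c1 X Y)"
definition "Cw1X = (\<lambda>X Y. - a1 * (zeta r a1 b c Y) - 2 * a1^2 * a2 * X * (psi r a1 a Y))"
definition "Cw1Y = (\<lambda>X Y. a1^2 * (th2 r a1 b1 c1 Y) + a1 * a2 * (phi r a1 a Y) + a1^2 * a2 * Y * (psi r a1 a Y) - (sg r) * a1^2 * X * (xi r a1 b c Y) - (sg r) * a1^3 * a2 * X^2 * (phi r a1 a Y))"
definition "Cw2 = (\<lambda>X Y. W2 r a1 a2 a b c X Y)"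
definition "Cw2X = (\<lambda>X Y. 2 * a1 * a2 * (phi r a1 a Y))"
definition "Cw2Y = (\<lambda>X Y. a1 * (zeta r a1 b c Y) + 2 * a1^2 * a2 * X * (psi r a1 a Y))"
definition "Cw1XX = (\<lambda>X Y. - 2 * a1^2 * a2 * (psi r a1 a Y))"
definition "Cw1XY = (\<lambda>X Y. - (sg r) * a1^2 * (xi r a1 b c Y) - 2 * (sg r) * a1^3 * a2 * X * (phi r a1 a Y))"
definition "Cw1YX = (\<lambda>X Y. - (sg r) * a1^2 * (xi r a1 b c Y) - 2 * (sg r) * a1^3 * a2 * X * (phi r a1 a Y))"
definition "Cw1YY = (\<lambda>X Y. (sg r) * a1^3 * (vtheta r a1 b1 c1 Y) + 2 * a1^2 * a2 * (psi r a1 a Y) + (sg r) * a1^3 * a2 * Y * (phi r a1 a Y) - (sg r) * a1^3 * X * (zeta r a1 b c Y) - (sg r) * a1^4 * a2 * X^2 * (psi r a1 a Y))"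
definition "Cw2XX = (\<lambda>X Y. 0)"
definition "Cw2XY = (\<lambda>X Y. 2 * a1^2 * a2 * (psi r a1 a Y))"
definition "Cw2YX = (\<lambda>X Y. 2 * a1^2 * a2 * (psi r a1 a Y))"
definition "Cw2YY = (\<lambda>X Y. (sg r) * a1^2 * (xi r a1 b c Y) + 2 * (sg r) * a1^3 * a2 * X * (phi r a1 a Y))"
definition "CSS = (\<lambda>X Y. - X * (xi r a1 b c Y) - a1 * a2 * X^2 * (phi r a1 a Y) + (if a1 = 0 then 0 else (sg r) * (th2 r a1 b1 c1 Y) + (sg r) * a2 * (Y * (psi r a1 a Y) - (phi r a1 a Y) / a1)))"
definition "Cmw2 = (\<lambda>X Y. - W2 r a1 a2 a b c X Y)"
lemma pd_w1: "pdiff Cw1 Cw1X Cw1Y"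
  apply (rule pdiff_poly[where fa="(\<lambda>Y. a1 * (vtheta r a1 b1 c1 Y) + a1 * a2 * Y * (phi r a1 a Y))" and fb="(\<lambda>Y. - a1 * (zeta r a1 b c Y))" and fc="(\<lambda>Y. - (a1^2) * a2 * (psi r a1 a Y))" and ga="(\<lambda>Y. a1^2 * (th2 r a1 b1 c1 Y) + a1 * a2 * (phi r a1 a Y) + a1^2 * a2 * Y * (psi r a1 a Y))" and gb="(\<lambda>Y. - (sg r) * a1^2 * (xi r a1 b c Y))" and gc="(\<lambda>Y. - (sg r) * a1^3 * a2 * (phi r a1 a Y))"])
  apply ((rule derivative_eq_intros oneD refl | simp)+; simp add: algebra_simps power2_eq_square power3_eq_cube power4_eq_xxxx)+
  apply (simp_all add: Cw1_def Cw1X_def Cw1Y_def W1_def W2_def algebra_simps power2_eq_square power3_eq_cube power4_eq_xxxx)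
  done
lemma pd_w2: "pdiff Cw2 Cw2X Cw2Y"
  apply (rule pdiff_poly[where fa="(\<lambda>Y. (xi r a1 b c Y))" and fb="(\<lambda>Y. 2 * a1 * a2 * (phi r a1 a Y))" and fc="(\<lambda>Y. 0)" and ga="(\<lambda>Y. a1 * (zeta r a1 b c Y))" and gb="(\<lambda>Y. 2 * a1^2 * a2 * (psi r a1 a Y))" and gc="(\<lambda>Y. 0)"])
  apply ((rule derivative_eq_intros oneD refl | simp)+; simp add: algebra_simps power2_eq_square power3_eq_cube power4_eq_xxxx)+
  apply (simp_all add: Cw2_def Cw2X_def Cw2Y_def W1_def W2_def algebra_simps power2_eq_square power3_eq_cube power4_eq_xxxx)
  done
lemma pd_w1X: "pdiff Cw1X Cw1XX Cw1XY"
  apply (rule pdiff_poly[where fa="(\<lambda>Y. - a1 * (zeta r a1 b c Y))" and fb="(\<lambda>Y. - 2 * a1^2 * a2 * (psi r a1 a Y))" and fc="(\<lambda>Y. 0)" and ga="(\<lambda>Y. - (sg r) * a1^2 * (xi r a1 b c Y))" and gb="(\<lambda>Y. - 2 * (sg r) * a1^3 * a2 * (phi r a1 a Y))" and gc="(\<lambda>Y. 0)"])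
  apply ((rule derivative_eq_intros oneD refl | simp)+; simp add: algebra_simps power2_eq_square power3_eq_cube power4_eq_xxxx)+
  apply (simp_all add: Cw1X_def Cw1XX_def Cw1XY_def W1_def W2_def algebra_simps power2_eq_square power3_eq_cube power4_eq_xxxx)
  done
lemma pd_w1Y: "pdiff Cw1Y Cw1YX Cw1YY"
  apply (rule pdiff_poly[where fa="(\<lambda>Y. a1^2 * (th2 r a1 b1 c1 Y) + a1 * a2 * (phi r a1 a Y) + a1^2 * a2 * Y * (psi r a1 a Y))" and fb="(\<lambda>Y. - (sg r) * a1^2 * (xi r a1 b c Y))" and fc="(\<lambda>Y. - (sg r) * a1^3 * a2 * (phi r a1 a Y))" and ga="(\<lambda>Y. (sg r) * a1^3 * (vtheta r a1 b1 c1 Y) + 2 * a1^2 * a2 * (psi r a1 a Y) + (sg r) * a1^3 * a2 * Y * (phi r a1 a Y))" and gb="(\<lambda>Y. - (sg r) * a1^3 * (zeta r a1 b c Y))" and gc="(\<lambda>Y. - (sg r) * a1^4 * a2 * (psi r a1 a Y))"])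
  apply ((rule derivative_eq_intros oneD refl | simp)+; simp add: algebra_simps power2_eq_square power3_eq_cube power4_eq_xxxx)+
  apply (simp_all add: Cw1Y_def Cw1YX_def Cw1YY_def W1_def W2_def algebra_simps power2_eq_square power3_eq_cube power4_eq_xxxx)
  done
lemma pd_w2X: "pdiff Cw2X Cw2XX Cw2XY"
  apply (rule pdiff_poly[where fa="(\<lambda>Y. 2 * a1 * a2 * (phi r a1 a Y))" and fb="(\<lambda>Y. 0)" and fc="(\<lambda>Y. 0)" and ga="(\<lambda>Y. 2 * a1^2 * a2 * (psi r a1 a Y))" and gb="(\<lambda>Y. 0)" and gc="(\<lambda>Y. 0)"])
  apply ((rule derivative_eq_intros oneD refl | simp)+; simp add: algebra_simps power2_eq_square power3_eq_cube power4_eq_xxxx)+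
  apply (simp_all add: Cw2X_def Cw2XX_def Cw2XY_def W1_def W2_def algebra_simps power2_eq_square power3_eq_cube power4_eq_xxxx)
  done
lemma pd_w2Y: "pdiff Cw2Y Cw2YX Cw2YY"
  apply (rule pdiff_poly[where fa="(\<lambda>Y. a1 * (zeta r a1 b c Y))" and fb="(\<lambda>Y. 2 * a1^2 * a2 * (psi r a1 a Y))" and fc="(\<lambda>Y. 0)" and ga="(\<lambda>Y. (sg r) * a1^2 * (xi r a1 b c Y))" and gb="(\<lambda>Y. 2 * (sg r) * a1^3 * a2 * (phi r a1 a Y))" and gc="(\<lambda>Y. 0)"])
  apply ((rule derivative_eq_intros oneD refl | simp)+; simp add: algebra_simps power2_eq_square power3_eq_cube power4_eq_xxxx)+
  apply (simp_all add: Cw2Y_def Cw2YX_def Cw2YY_def W1_def W2_def algebra_simps power2_eq_square power3_eq_cube power4_eq_xxxx)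
  done
lemma hh_D: "((\<lambda>Y. if a1 = 0 then 0 else sg r * th2 r a1 b1 c1 Y + sg r * a2 * (Y * psi r a1 a Y - phi r a1 a Y / a1))
   has_real_derivative a1 * vtheta r a1 b1 c1 Y + a1 * a2 * Y * phi r a1 a Y) (at Y)"
proof (cases "a1 = 0")
  case True then show ?thesis by simp
next
  case False
  have s: "sg r * sg r = 1" by (rule sgsq)
  show ?thesis using False
    apply simp
    apply (rule derivative_eq_intros oneD refl | simp)+
    using s apply (simp add: field_simps)
    apply (metis (no_types, opaque_lifting) mult.assoc mult.commute mult.left_neutral)
    done
qed

lemma pd_SS: "pdiff CSS Cmw2 Cw1"
  apply (rule pdiff_poly[where fa="(\<lambda>Y. (if a1 = 0 then 0 else (sg r) * (th2 r a1 b1 c1 Y) + (sg r) * a2 * (Y * (psi r a1 a Y) - (phi r a1 a Y) / a1)))" and fb="(\<lambda>Y. - (xi r a1 b c Y))" and fc="(\<lambda>Y. - a1 * a2 * (phi r a1 a Y))" and ga="(\<lambda>Y. a1 * (vtheta r a1 b1 c1 Y) + a1 * a2 * Y * (phi r a1 a Y))" and gb="(\<lambda>Y. - a1 * (zeta r a1 b c Y))" and gc="(\<lambda>Y. - (a1^2) * a2 * (psi r a1 a Y))"])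
  apply (unfold CSS_def Cmw2_def Cw1_def W1_def W2_def)
  apply (rule hh_D)
  apply ((rule derivative_eq_intros oneD refl | simp)+; simp add: algebra_simps power2_eq_square power3_eq_cube power4_eq_xxxx)+
done

lemma c_div: "Cw1X X Y + Cw2Y X Y = 0"
  unfolding Cw1X_def Cw2Y_def by (simp add: algebra_simps)
lemma c_lap1: "Cw1XX X Y + Cw1YY X Y = (sg r * a1^2) * Cw1 X Y"
  unfolding Cw1XX_def Cw1YY_def Cw1_def W1_def by (simp add: algebra_simps power2_eq_square power3_eq_cube power4_eq_xxxx)
lemma c_lap2: "Cw2XX X Y + Cw2YY X Y = (sg r * a1^2) * Cw2 X Y"
  unfolding Cw2XX_def Cw2YY_def Cw2_def W2_def by (simp add: algebra_simps power2_eq_square power3_eq_cube power4_eq_xxxx)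
lemma c_curl: "Cw2X X Y - Cw1Y X Y = - (sg r * a1^2) * CSS X Y"
proof (cases "a1 = 0")
  case True then show ?thesis unfolding Cw2X_def Cw1Y_def CSS_def by simp
next
  case False
  have s: "sg r * sg r = 1" by (rule sgsq)
  show ?thesis using False s unfolding Cw2X_def Cw1Y_def CSS_def
    by (simp add: field_simps power2_eq_square power3_eq_cube) algebra
qed

lemma SMif: "f \<in> SM \<Longrightarrow> g \<in> SM \<Longrightarrow> (\<lambda>t x y z. if P then f t x y z else g t x y z) \<in> SM"
  by (cases P) simp_all

lemma main_aux:
  fixes \<nu> \<eta> \<mu>0 \<rho> k l C1 C2 :: real
  assumes "\<nu> > 0" and "\<eta> > 0" and "\<mu>0 > 0" and "\<rho> > 0"
    and "r = 0 \<or> r = 1"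
  defines "WW1 \<equiv> (\<lambda>t x y. W1 r a1 a2 a b c b1 c1 (bigX k l t x y) (bigY k l t x y))"
    and "WW2 \<equiv> (\<lambda>t x y. W2 r a1 a2 a b c (bigX k l t x y) (bigY k l t x y))"
  defines "u \<equiv> (\<lambda>t x y z. k * (- y) + C1 * exp ((-1) ^ r * \<nu> * a1\<^sup>2 * t) *
                 (WW1 t x y * cos (alpha k l t) - WW2 t x y * sin (alpha k l t)))"
    and "v \<equiv> (\<lambda>t x y z. k * x + C1 * exp ((-1) ^ r * \<nu> * a1\<^sup>2 * t) *
                 (WW1 t x y * sin (alpha k l t) + WW2 t x y * cos (alpha k l t)))"
    and "w \<equiv> (\<lambda>t x y z. 0 :: real)"
    and "H1 \<equiv> (\<lambda>t x y z. C2 * exp ((-1) ^ r * \<eta> * a1\<^sup>2 * t) *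
                 (WW1 t x y * cos (alpha k l t) - WW2 t x y * sin (alpha k l t)))"
    and "H2 \<equiv> (\<lambda>t x y z. C2 * exp ((-1) ^ r * \<eta> * a1\<^sup>2 * t) *
                 (WW1 t x y * sin (alpha k l t) + WW2 t x y * cos (alpha k l t)))"
    and "H3 \<equiv> (\<lambda>t x y z. 0 :: real)"
  shows "\<exists>p. smooth4 p \<and> MHD \<nu> \<eta> \<mu>0 \<rho> u v w H1 H2 H3 p"
proof -
  define lam where "lam = sg r * a1^2"
  have m2: "Cmw2 = (\<lambda>X Y. - Cw2 X Y)" by (simp add: Cmw2_def Cw2_def fun_eq_iff)
  interpret M: mhdgen k l C1 C2 \<nu> \<eta> \<mu>0 \<rho> lam Cw1 Cw2 Cw1X Cw1Y Cw2X Cw2Y Cw1XX Cw1XY Cw1YX Cw1YY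
     Cw2XX Cw2XY Cw2YX Cw2YY CSS
    apply unfold_locales
    using pd_w1 pd_w2 pd_w1X pd_w1Y pd_w2X pd_w2Y pd_SS[unfolded m2] c_div c_lap1 c_lap2 c_curl assms(4)
    unfolding lam_def by auto
  have e: "(-1::real) ^ r = sg r" using assms(5) by (auto simp: sg_def)
  have uu: "u = M.G1 0 (-k) C1 (\<nu>*lam)" "v = M.G2 k 0 C1 (\<nu>*lam)"
     "H1 = M.G1 0 0 C2 (\<eta>*lam)" "H2 = M.G2 0 0 C2 (\<eta>*lam)"
    unfolding M.G1_def M.G2_def
    unfolding u_def v_def H1_def H2_def WW1_def WW2_def lift_def Cw1_def Cw2_def lam_def e
    by (simp_all add: fun_eq_iff mult_ac)
  have sm: "smooth4 M.P"
  proof (rule SM_smooth)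
    show "M.P \<in> SM"
      unfolding M.P_def
      unfolding lift_def CSS_def Cw1_def Cw2_def W1_def W2_def phi_def psi_def xi_def zeta_def vtheta_def th2_def
        sg_def bigX_def bigY_def alpha_def lam_def
      by (intro SMc SMt SMx SMy SMz SMadd SMmul SMexp SMsin SMcos SMdiff SMminus SMdiv SMpow SMif)
  qed
  show ?thesis
    using sm M.mhd unfolding uu w_def H3_def by blast
qed
end

theorem mainTheorem7:
  fixes \<nu> \<eta> \<mu>0 \<rho> k l a1 a2 C1 C2 a b c b1 c1 :: real and r :: nat
  assumes "\<nu> > 0" and "\<eta> > 0" and "\<mu>0 > 0" and "\<rho> > 0"
    and "r = 0 \<or> r = 1"
  defines "WW1 \<equiv> (\<lambda>t x y. W1 r a1 a2 a b c b1 c1 (bigX k l t x y) (bigY k l t x y))"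
    and "WW2 \<equiv> (\<lambda>t x y. W2 r a1 a2 a b c (bigX k l t x y) (bigY k l t x y))"
  defines "u \<equiv> (\<lambda>t x y z. k * (- y) + C1 * exp ((-1) ^ r * \<nu> * a1\<^sup>2 * t) *
                 (WW1 t x y * cos (alpha k l t) - WW2 t x y * sin (alpha k l t)))"
    and "v \<equiv> (\<lambda>t x y z. k * x + C1 * exp ((-1) ^ r * \<nu> * a1\<^sup>2 * t) *
                 (WW1 t x y * sin (alpha k l t) + WW2 t x y * cos (alpha k l t)))"
    and "w \<equiv> (\<lambda>t x y z. 0 :: real)"
    and "H1 \<equiv> (\<lambda>t x y z. C2 * exp ((-1) ^ r * \<eta> * a1\<^sup>2 * t) *
                 (WW1 t x y * cos (alpha k l t) - WW2 t x y * sin (alpha k l t)))"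
    and "H2 \<equiv> (\<lambda>t x y z. C2 * exp ((-1) ^ r * \<eta> * a1\<^sup>2 * t) *
                 (WW1 t x y * sin (alpha k l t) + WW2 t x y * cos (alpha k l t)))"
    and "H3 \<equiv> (\<lambda>t x y z. 0 :: real)"
  shows "\<exists>p. smooth4 p \<and> MHD \<nu> \<eta> \<mu>0 \<rho> u v w H1 H2 H3 p"
  unfolding u_def v_def w_def H1_def H2_def H3_def WW1_def WW2_def by (rule main_aux[OF assms(1-5)])


end
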